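(* Let $m$ be a positive integer and let $d$ be an integer with $1\le d\le m$ (as specified in the context), and $t=2^{d-1}$. Let $A=e^{-t(I-\mathbf{G})}$ be the matrix indexed by $\mathrm{RM}(m,d)$ as defined in the context, $n=|\mathrm{RM}(m,d)|$, and $\delta=2^{-m/2}$. Then the semidefinite program $$\max\ \mathbb{E}_{f}\Big\langle w_f,\sum_{g}A_{f,g}w_g\Big\rangle\quad\text{s.t.}\quad \mathbb{E}_f\langle w_f,w_f\rangle=1,\quad \mathbb{E}_{f,g}|\langle w_f,w_g\rangle|\le\delta,$$ over vectors $\{w_f\}_{f\in\mathrm{RM}(m,d)}$ in a real inner product space (expectations over uniform $f,g\in\mathrm{RM}(m,d)$), has a feasible solution of value $1/e$.
   Context: $\mathrm{RM}(m,d)$ is the Reed–Muller code: the set of functions $\mathbb{F}_2^m\to\mathbb{F}_2$ given by polynomials of total degree $\le d$ in $m$ variables over $\mathbb{F}_2$, so $n=2^{\sum_{r\le d}\binom{m}{r}}$. Let $T$ be the set of functions $\mathbb{F}_2^m\to\mathbb{F}_2$ that are products of exactly $d$ linearly independent affine forms. $G$ is the Cayley graph on $\mathrm{RM}(m,d)$ with generating set $T$, and $\mathbf{G}$ its probability transition matrix: $\mathbf{G}_{f,g}=1/|T|$ if $f-g\in T$ and $0$ otherwise. $A=e^{-t(I-\mathbf{G})}$. In the paper the parameters are: $\eta=\delta^{1/(4\log_2 3)}$, $\varepsilon_2=\min\{\varepsilon_1,1/20\}$ where $\varepsilon_1>0$ is the absolute constant from the Reed–Muller testing theorem of Bhattacharyya–Kopparty–Schoenebeck–Sudan–Zuckerman,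 $d=\log_2\log_2(1/\eta)+\log_2(1/\varepsilon_2)-1$ (assumed to be an integer), $t=2^{d-1}$, $k=n/2^{m/2}$, so $\delta=k/n$. *)

theory Defs
  imports "HOL-Analysis.Analysis" "HOL-Library.Z2"
begin

text \<open>Points of F_2^m: maps nat => bit vanishing at coordinates >= m.
  Functions F_2^m -> F_2 are maps on all of nat => bit, normalised to 0 off the cube.\<close>

definition cube :: "nat \<Rightarrow> (nat \<Rightarrow> bit) set" where
  "cube m = {x. \<forall>i\<ge>m. x i = 0}"

type_synonym bfun = "(nat \<Rightarrow> bit) \<Rightarrow> bit"

definition RM :: "nat \<Rightarrow> nat \<Rightarrow> bfun set" where
  "RM m d = {f. \<exists>c :: nat set \<Rightarrow> bit.
     (\<forall>S. c S \<noteq> 0 \<longrightarrow> S \<subseteq> {..<m} \<and> card S \<le> d) \<and>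
     (\<forall>x. f x = (if x \<in> cube m then (\<Sum>S\<in>Pow {..<m}. c S * (\<Prod>i\<in>S. x i)) else 0))}"

text \<open>T: products of exactly d affine forms b_j + sum_i a_j_i x_i whose linear parts
  a_0,...,a_(d-1) are linearly independent over F_2 (no nonempty subfamily sums to 0).\<close>
definition Tgen :: "nat \<Rightarrow> nat \<Rightarrow> bfun set" where
  "Tgen m d = {f. \<exists>(a :: nat \<Rightarrow> nat \<Rightarrow> bit) (b :: nat \<Rightarrow> bit).
     (\<forall>J\<subseteq>{..<d}. J \<noteq> {} \<longrightarrow> (\<exists>i<m. (\<Sum>j\<in>J. a j i) \<noteq> 0)) \<and>
     (\<forall>x. f x = (if x \<in> cube m then (\<Prod>j<d. b j + (\<Sum>i<m. a j i * x i)) else 0))}"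

definition Gmat :: "nat \<Rightarrow> nat \<Rightarrow> bfun \<Rightarrow> bfun \<Rightarrow> real" where
  "Gmat m d f g = (if (\<lambda>x. f x - g x) \<in> Tgen m d then 1 / real (card (Tgen m d)) else 0)"

definition mmult :: "'a set \<Rightarrow> ('a \<Rightarrow> 'a \<Rightarrow> real) \<Rightarrow> ('a \<Rightarrow> 'a \<Rightarrow> real) \<Rightarrow> 'a \<Rightarrow> 'a \<Rightarrow> real" where
  "mmult R X Y f g = (\<Sum>h\<in>R. X f h * Y h g)"

definition mone :: "'a \<Rightarrow> 'a \<Rightarrow> real" where
  "mone f g = (if f = g then 1 else 0)"

fun mpow :: "'a set \<Rightarrow> ('a \<Rightarrow> 'a \<Rightarrow> real) \<Rightarrow> nat \<Rightarrow> 'a \<Rightarrow> 'a \<Rightarrow> real" where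
  "mpow R X 0 = mone"
| "mpow R X (Suc k) = mmult R X (mpow R X k)"

definition mexp :: "'a set \<Rightarrow> ('a \<Rightarrow> 'a \<Rightarrow> real) \<Rightarrow> 'a \<Rightarrow> 'a \<Rightarrow> real" where
  "mexp R X f g = (\<Sum>k. mpow R X k f g / fact k)"

definition Amat :: "nat \<Rightarrow> nat \<Rightarrow> real \<Rightarrow> bfun \<Rightarrow> bfun \<Rightarrow> real" where
  "Amat m d t = mexp (RM m d) (\<lambda>f g. - t * (mone f g - Gmat m d f g))"

end

theory Submission
  imports Defs
begin


lemma bit_cases2: "(b::bit) = 0 \<or> b = 1" by (cases b) auto
lemma bit_add_self[simp]: "(b::bit) + b = 0" by (cases b) auto
lemma bit_one_one[simp]: "(1::bit) + 1 = 0" by simp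
lemma bit_minus: "(a::bit) - b = a + b" by simp
lemma bit_UNIV: "(UNIV :: bit set) = {0,1}" using bit_cases2 by auto
lemma finite_bit_UNIV[simp]: "finite (UNIV :: bit set)" by (simp add: bit_UNIV)

definition chi :: "bit \<Rightarrow> real" where "chi b = (if b = 0 then 1 else -1)"

lemma chi_add: "chi (a + b) = chi a * chi b"
  by (cases a; cases b) (auto simp: chi_def)
lemma chi_sq[simp]: "chi a * chi a = 1" by (cases a) (auto simp: chi_def)
lemma chi_0[simp]: "chi 0 = 1" and chi_1[simp]: "chi 1 = -1" by (auto simp: chi_def)
lemma chi_sum: "finite J \<Longrightarrow> chi (\<Sum>j\<in>J. z j) = (\<Prod>j\<in>J. chi (z j))"
proof (induction J rule: finite_induct)
  case (insert x F)
  then show ?case by (metis chi_add prod.insert sum.insert)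
qed simp
lemma chi_ind: "(1 - chi b) / 2 = of_bool (b = 1)" by (cases b) (auto simp: chi_def)

lemma prod_bit: "finite S \<Longrightarrow> (\<Prod>i\<in>S. (x i::bit)) = (if \<forall>i\<in>S. x i = 1 then 1 else 0)"
  by (induction S rule: finite_induct) auto

lemma involution_sum_zero:
  fixes F :: "'a \<Rightarrow> real"
  assumes "\<And>a. a \<in> A \<Longrightarrow> \<sigma> a \<in> A" "\<And>a. a \<in> A \<Longrightarrow> \<sigma> (\<sigma> a) = a"
    "\<And>a. a \<in> A \<Longrightarrow> F (\<sigma> a) = - F a"
  shows "sum F A = 0"
proof -
  have b: "bij_betw \<sigma> A A" by (rule bij_betwI[where g=\<sigma>]) (use assms in auto)
  have "sum F A = sum (F \<circ> \<sigma>) A" using sum.reindex_bij_betw[OF b, of F] by simp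
  also have "\<dots> = - sum F A" using assms(3) by (simp add: sum_negf)
  finally show ?thesis by simp
qed

lemma involution_sum_eq:
  fixes F :: "'a \<Rightarrow> 'b::comm_monoid_add"
  assumes "\<And>a. a \<in> A \<Longrightarrow> \<sigma> a \<in> A" "\<And>a. a \<in> A \<Longrightarrow> \<sigma> (\<sigma> a) = a"
  shows "sum (\<lambda>a. F (\<sigma> a)) A = sum F A"
proof -
  have b: "bij_betw \<sigma> A A" by (rule bij_betwI[where g=\<sigma>]) (use assms in auto)
  show ?thesis using sum.reindex_bij_betw[OF b, of F] by simp
qed

lemma finite_cube: "finite (cube m)"
proof -
  have "cube m \<subseteq> (\<lambda>g i. if i < m then g i else 0) ` ({..<m} \<rightarrow>\<^sub>E (UNIV::bit set))"
  proof
    fix x assume x: "x \<in> cube m"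
    show "x \<in> (\<lambda>g i. if i < m then g i else 0) ` ({..<m} \<rightarrow>\<^sub>E (UNIV::bit set))"
      by (rule image_eqI[where x="restrict x {..<m}"]) (use x in \<open>auto simp: cube_def\<close>)
  qed
  then show ?thesis by (rule finite_subset) (intro finite_imageI finite_PiE; simp)
qed

lemma card_cube: "card (cube m) = 2 ^ m"
proof -
  have "bij_betw (\<lambda>x. {i. x i = 1}) (cube m) (Pow {..<m})"
  proof (rule bij_betwI[where g="\<lambda>S i. if i \<in> S then 1 else 0"])
    show "(\<lambda>x. {i. x i = 1}) \<in> cube m \<rightarrow> Pow {..<m}"
      by (auto simp: cube_def) (metis not_less zero_neq_one)
    show "(\<lambda>S i. if i \<in> S then 1 else 0) \<in> Pow {..<m} \<rightarrow> cube m" by (auto simp: cube_def)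
    show "\<And>x. x \<in> cube m \<Longrightarrow> (\<lambda>i. if i \<in> {i. x i = 1} then 1 else 0) = x"
      using bit_cases2 by (auto intro!: ext)
    show "\<And>y. y \<in> Pow {..<m} \<Longrightarrow> {i. (if i \<in> y then 1 else 0) = (1::bit)} = y" by auto
  qed
  then show ?thesis by (simp add: bij_betw_same_card card_Pow)
qed

lemma cube_add: "x \<in> cube m \<Longrightarrow> v \<in> cube m \<Longrightarrow> (\<lambda>i. x i + v i) \<in> cube m"
  by (auto simp: cube_def)

lemma unit_cube: "i < m \<Longrightarrow> (\<lambda>k. if k = i then 1 else 0) \<in> cube m"
  by (auto simp: cube_def)

lemma sum_unit: "(i::nat) < m \<Longrightarrow> (\<Sum>k<m. c k * (if k = i then 1 else 0)) = (c i :: bit)"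
proof -
  assume i: "i < m"
  have "(\<Sum>k<m. c k * (if k = i then 1 else 0)) = (\<Sum>k<m. (if k = i then c i else 0))"
    by (rule sum.cong) auto
  also have "\<dots> = c i" using i by (subst sum.delta) auto
  finally show ?thesis .
qed

lemma cube_char_sum:
  assumes "i0 < m" "c i0 = 1"
  shows "(\<Sum>y\<in>cube m. chi (\<Sum>i<m. c i * y i)) = 0"
proof (rule involution_sum_zero[where \<sigma>="\<lambda>y. y(i0 := y i0 + 1)"])
  fix y assume y: "y \<in> cube m"
  show "y(i0 := y i0 + 1) \<in> cube m" using y assms by (auto simp: cube_def)
  show "(y(i0 := y i0 + 1))(i0 := (y(i0 := y i0 + 1)) i0 + 1) = y"
    by (auto simp: add.assoc)
  have "(\<Sum>i<m. c i * (y(i0 := y i0 + 1)) i) = (\<Sum>i<m. c i * y i + (if i = i0 then 1 else 0))"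
    using assms by (intro sum.cong) (auto simp: distrib_left)
  also have "\<dots> = (\<Sum>i<m. c i * y i) + (\<Sum>i<m. (if i = i0 then 1 else 0))"
    by (rule sum.distrib)
  also have "(\<Sum>i<m. (if i = i0 then (1::bit) else 0)) = 1"
    using assms by (subst sum.delta) auto
  finally show "chi (\<Sum>i<m. c i * (y(i0 := y i0 + 1)) i) = - chi (\<Sum>i<m. c i * y i)"
    by (simp add: chi_add)
qed

lemma cube_char_sum0:
  assumes "\<forall>i<m. c i = 0"
  shows "(\<Sum>y\<in>cube m. chi (\<Sum>i<m. c i * y i)) = 2 ^ m"
  using assms by (simp add: card_cube)



definition cutf :: "nat \<Rightarrow> bfun \<Rightarrow> bfun" where
  "cutf m p = (\<lambda>x. if x \<in> cube m then p x else 0)"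
definition polyv :: "nat \<Rightarrow> (nat set \<Rightarrow> bit) \<Rightarrow> (nat \<Rightarrow> bit) \<Rightarrow> bit" where
  "polyv m c x = (\<Sum>S\<in>Pow {..<m}. c S * (\<Prod>i\<in>S. x i))"
definition okc :: "nat \<Rightarrow> nat \<Rightarrow> (nat set \<Rightarrow> bit) \<Rightarrow> bool" where
  "okc m d c = (\<forall>S. c S \<noteq> 0 \<longrightarrow> S \<subseteq> {..<m} \<and> card S \<le> d)"

lemma RM_cutI: "okc m d c \<Longrightarrow> (\<And>x. x \<in> cube m \<Longrightarrow> p x = polyv m c x) \<Longrightarrow> cutf m p \<in> RM m d"
  unfolding RM_def okc_def cutf_def polyv_def by (rule CollectI, rule exI[of _ c]) auto

lemma RM_cutE: assumes "cutf m p \<in> RM m d"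
  obtains c where "okc m d c" "\<And>x. x \<in> cube m \<Longrightarrow> p x = polyv m c x"
proof -
  from assms obtain c where c: "\<forall>S. c S \<noteq> 0 \<longrightarrow> S \<subseteq> {..<m} \<and> card S \<le> d"
    "\<forall>x. cutf m p x = (if x \<in> cube m then (\<Sum>S\<in>Pow {..<m}. c S * (\<Prod>i\<in>S. x i)) else 0)"
    unfolding RM_def by blast
  show ?thesis
  proof (rule that[of c])
    show "okc m d c" using c(1) by (simp add: okc_def)
    fix x assume "x \<in> cube m" then show "p x = polyv m c x"
      using c(2)[rule_format, of x] by (simp add: cutf_def polyv_def)
  qed
qed

lemma RM_zero: "f \<in> RM m d \<Longrightarrow> x \<notin> cube m \<Longrightarrow> f x = 0"
  unfolding RM_def by auto

lemma RM_cut: "f \<in> RM m d \<Longrightarrow> cutf m f = f"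
proof
  fix x assume "f \<in> RM m d"
  then show "cutf m f x = f x" using RM_zero[of f m d x] unfolding cutf_def by simp
qed

lemma RM_mono: "f \<in> RM m d \<Longrightarrow> d \<le> d' \<Longrightarrow> f \<in> RM m d'"
proof -
  assume f: "f \<in> RM m d" and dd: "d \<le> d'"
  from f obtain c where c: "\<forall>S. c S \<noteq> 0 \<longrightarrow> S \<subseteq> {..<m} \<and> card S \<le> d"
    "\<forall>x. f x = (if x \<in> cube m then (\<Sum>S\<in>Pow {..<m}. c S * (\<Prod>i\<in>S. x i)) else 0)"
    unfolding RM_def by blast
  have "\<forall>S. c S \<noteq> 0 \<longrightarrow> S \<subseteq> {..<m} \<and> card S \<le> d'" using c(1) dd le_trans by blast
  with c(2) show ?thesis unfolding RM_def by blast
qed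

lemma RM_add_cut:
  assumes "cutf m p \<in> RM m d" "cutf m q \<in> RM m d"
  shows "cutf m (\<lambda>x. p x + q x) \<in> RM m d"
proof -
  obtain c1 where c1: "okc m d c1" "\<And>x. x \<in> cube m \<Longrightarrow> p x = polyv m c1 x"
    using assms(1) by (rule RM_cutE) blast
  obtain c2 where c2: "okc m d c2" "\<And>x. x \<in> cube m \<Longrightarrow> q x = polyv m c2 x"
    using assms(2) by (rule RM_cutE) blast
  show ?thesis
  proof (rule RM_cutI[of _ _ "\<lambda>S. c1 S + c2 S"])
    show "okc m d (\<lambda>S. c1 S + c2 S)" unfolding okc_def
    proof (intro allI impI)
      fix S assume "c1 S + c2 S \<noteq> 0"
      then have "c1 S \<noteq> 0 \<or> c2 S \<noteq> 0" by auto
      then show "S \<subseteq> {..<m} \<and> card S \<le> d" using c1(1) c2(1) unfolding okc_def by blast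
    qed
    fix x assume x: "x \<in> cube m"
    have "polyv m (\<lambda>S. c1 S + c2 S) x = polyv m c1 x + polyv m c2 x"
      unfolding polyv_def distrib_right by (rule sum.distrib)
    then show "p x + q x = polyv m (\<lambda>S. c1 S + c2 S) x"
      using c1(2)[OF x] c2(2)[OF x] by simp
  qed
qed

lemma RM_add: "f \<in> RM m d \<Longrightarrow> g \<in> RM m d \<Longrightarrow> (\<lambda>x. f x + g x) \<in> RM m d"
proof -
  assume f: "f \<in> RM m d" and g: "g \<in> RM m d"
  have "cutf m (\<lambda>x. f x + g x) \<in> RM m d"
    using RM_add_cut[of m f d g] RM_cut[OF f] RM_cut[OF g] f g by simp
  moreover have "cutf m (\<lambda>x. f x + g x) = (\<lambda>x. f x + g x)"
  proof
    fix x show "cutf m (\<lambda>x. f x + g x) x = f x + g x"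
      using RM_zero[OF f, of x] RM_zero[OF g, of x] unfolding cutf_def by simp
  qed
  ultimately show ?thesis by simp
qed

lemma prod_union_bit:
  assumes "finite S" "finite T"
  shows "(\<Prod>i\<in>S. (x i::bit)) * (\<Prod>i\<in>T. x i) = (\<Prod>i\<in>S \<union> T. x i)"
  using assms by (auto simp: prod_bit)

lemma if_zero_mult: "(if P then a * c else 0) = (if P then a else 0) * (c::'a::semiring_0)"
  by simp

lemma RM_mult_cut:
  assumes "cutf m p \<in> RM m d1" "cutf m q \<in> RM m d2"
  shows "cutf m (\<lambda>x. p x * q x) \<in> RM m (d1 + d2)"
proof -
  obtain c1 where c1: "okc m d1 c1" "\<And>x. x \<in> cube m \<Longrightarrow> p x = polyv m c1 x"
    using assms(1) by (rule RM_cutE) blast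
  obtain c2 where c2: "okc m d2 c2" "\<And>x. x \<in> cube m \<Longrightarrow> q x = polyv m c2 x"
    using assms(2) by (rule RM_cutE) blast
  define c where "c U = (\<Sum>S\<in>Pow {..<m}. \<Sum>T\<in>Pow {..<m}. if S \<union> T = U then c1 S * c2 T else 0)" for U
  show ?thesis
  proof (rule RM_cutI[of _ _ c])
    show "okc m (d1 + d2) c" unfolding okc_def
    proof (intro allI impI)
      fix U assume "c U \<noteq> 0"
      then obtain S where S: "S \<in> Pow {..<m}" and
        "(\<Sum>T\<in>Pow {..<m}. if S \<union> T = U then c1 S * c2 T else 0) \<noteq> 0"
        unfolding c_def using sum.not_neutral_contains_not_neutral by blast
      then obtain T where T: "T \<in> Pow {..<m}" and
        ne: "(if S \<union> T = U then c1 S * c2 T else 0) \<noteq> 0"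
        using sum.not_neutral_contains_not_neutral by blast
      from ne have U: "U = S \<union> T" and "c1 S \<noteq> 0" "c2 T \<noteq> 0" by (auto split: if_splits)
      then have "card S \<le> d1" "card T \<le> d2" using c1(1) c2(1) by (auto simp: okc_def)
      moreover have "card U \<le> card S + card T" using U card_Un_le by blast
      ultimately show "U \<subseteq> {..<m} \<and> card U \<le> d1 + d2" using S T U by auto
    qed
    fix x assume x: "x \<in> cube m"
    have "p x * q x = (\<Sum>S\<in>Pow {..<m}. \<Sum>T\<in>Pow {..<m}. c1 S * c2 T * (\<Prod>i\<in>S \<union> T. x i))"
    proof -
      have "p x * q x = (\<Sum>S\<in>Pow {..<m}. \<Sum>T\<in>Pow {..<m}. (c1 S * (\<Prod>i\<in>S. x i)) * (c2 T * (\<Prod>i\<in>T. x i)))"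
        unfolding c1(2)[OF x] c2(2)[OF x] polyv_def by (rule sum_product)
      also have "\<dots> = (\<Sum>S\<in>Pow {..<m}. \<Sum>T\<in>Pow {..<m}. c1 S * c2 T * (\<Prod>i\<in>S \<union> T. x i))"
      proof (intro sum.cong refl)
        fix S T assume "S \<in> Pow {..<m}" "T \<in> Pow {..<m}"
        then have "finite S" "finite T" by (auto intro: finite_subset)
        then show "(c1 S * (\<Prod>i\<in>S. x i)) * (c2 T * (\<Prod>i\<in>T. x i)) = c1 S * c2 T * (\<Prod>i\<in>S \<union> T. x i)"
          (is "?l = ?r")
        proof -
          have e: "(\<Prod>i\<in>S. x i) * (\<Prod>i\<in>T. x i) = (\<Prod>i\<in>S \<union> T. x i)"
            by (rule prod_union_bit) fact+
          have "?l = c1 S * c2 T * ((\<Prod>i\<in>S. x i) * (\<Prod>i\<in>T. x i))" by (simp only: ac_simps)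
          also have "\<dots> = ?r" by (simp only: e)
          finally show ?thesis .
        qed
      qed
      finally show ?thesis .
    qed
    also have "\<dots> = (\<Sum>S\<in>Pow {..<m}. \<Sum>T\<in>Pow {..<m}. \<Sum>U\<in>Pow {..<m}.
        (if S \<union> T = U then c1 S * c2 T * (\<Prod>i\<in>U. x i) else 0))"
    proof (intro sum.cong refl)
      fix S T assume "S \<in> Pow {..<m}" "T \<in> Pow {..<m}"
      then have "S \<union> T \<in> Pow {..<m}" by auto
      then show "c1 S * c2 T * (\<Prod>i\<in>S \<union> T. x i) =
        (\<Sum>U\<in>Pow {..<m}. (if S \<union> T = U then c1 S * c2 T * (\<Prod>i\<in>U. x i) else 0))"
        by (subst sum.delta') auto
    qed
    also have "\<dots> = (\<Sum>S\<in>Pow {..<m}. \<Sum>U\<in>Pow {..<m}. \<Sum>T\<in>Pow {..<m}.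
        (if S \<union> T = U then c1 S * c2 T * (\<Prod>i\<in>U. x i) else 0))"
      by (rule sum.cong[OF refl], rule sum.swap)
    also have "\<dots> = (\<Sum>U\<in>Pow {..<m}. \<Sum>S\<in>Pow {..<m}. \<Sum>T\<in>Pow {..<m}.
        (if S \<union> T = U then c1 S * c2 T * (\<Prod>i\<in>U. x i) else 0))"
      by (rule sum.swap)
    also have "\<dots> = polyv m c x"
      unfolding polyv_def c_def sum_distrib_right
      by ((rule sum.cong[OF refl])+, rule if_zero_mult)
    finally show "p x * q x = polyv m c x" .
  qed
qed

lemma RM_const: "cutf m (\<lambda>x. b) \<in> RM m 0"
proof (rule RM_cutI[of _ _ "\<lambda>S. if S = {} then b else 0"])
  show "okc m 0 (\<lambda>S. if S = {} then b else 0)" by (auto simp: okc_def)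
  fix x
  have "polyv m (\<lambda>S. if S = {} then b else 0) x = (\<Sum>S\<in>Pow {..<m}. if S = {} then b else 0)"
    unfolding polyv_def by (rule sum.cong) auto
  also have "\<dots> = b" by (subst sum.delta) auto
  finally show "b = polyv m (\<lambda>S. if S = {} then b else 0) x" by simp
qed

lemma RM_coord: "i < m \<Longrightarrow> cutf m (\<lambda>x. x i) \<in> RM m 1"
proof (rule RM_cutI[of _ _ "\<lambda>S. if S = {i} then 1 else 0"])
  assume "i < m"
  then show "okc m 1 (\<lambda>S. if S = {i} then 1 else 0)" by (auto simp: okc_def)
  fix x
  have "polyv m (\<lambda>S. if S = {i} then 1 else 0) x = (\<Sum>S\<in>Pow {..<m}. if S = {i} then x i else 0)"
    unfolding polyv_def by (rule sum.cong) auto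
  also have "\<dots> = x i" using \<open>i < m\<close> by (subst sum.delta) auto
  finally show "x i = polyv m (\<lambda>S. if S = {i} then 1 else 0) x" by simp
qed

lemma RM_lin: "k \<le> m \<Longrightarrow> cutf m (\<lambda>x. \<Sum>i<k. a i * x i) \<in> RM m 1"
proof (induction k)
  case 0
  have "cutf m (\<lambda>x. 0) \<in> RM m 1" using RM_mono[OF RM_const[of m 0]] by simp
  then show ?case by simp
next
  case (Suc k)
  have e: "(\<lambda>x. \<Sum>i<Suc k. a i * x i) = (\<lambda>x. (\<Sum>i<k. a i * x i) + a k * x k)"
    by (simp only: sum.lessThan_Suc)
  have h: "cutf m (\<lambda>x. a k * x k) \<in> RM m (0 + 1)"
    by (rule RM_mult_cut[OF RM_const RM_coord]) (use Suc.prems in simp)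
  have h': "cutf m (\<lambda>x. a k * x k) \<in> RM m 1" using h by (simp only: add_0)
  have "cutf m (\<lambda>x. (\<Sum>i<k. a i * x i) + a k * x k) \<in> RM m 1"
    by (rule RM_add_cut[OF Suc.IH[OF Suc_leD[OF Suc.prems]] h'])
  then show ?case by (simp only: e)
qed

lemma RM_affine: "cutf m (\<lambda>x. b + (\<Sum>i<m. a i * x i)) \<in> RM m 1"
  using RM_add_cut[OF RM_mono[OF RM_const[of m b]] RM_lin[of m m a]] by simp

lemma RM_prodk: "(\<And>j. j < k \<Longrightarrow> cutf m (l j) \<in> RM m 1) \<Longrightarrow> cutf m (\<lambda>x. \<Prod>j<k. l j x) \<in> RM m k"
proof (induction k)
  case 0
  then show ?case using RM_const[of m 1] by simp
next
  case (Suc k)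
  have e: "(\<lambda>x. \<Prod>j<Suc k. l j x) = (\<lambda>x. (\<Prod>j<k. l j x) * l k x)"
    by (simp only: prod.lessThan_Suc)
  have "cutf m (\<lambda>x. (\<Prod>j<k. l j x) * l k x) \<in> RM m (k + 1)"
    by (rule RM_mult_cut) (use Suc in auto)
  then show ?case unfolding e[symmetric] Suc_eq_plus1[symmetric] .
qed

lemma Tgen_RM: "Tgen m d \<subseteq> RM m d"
proof
  fix f assume "f \<in> Tgen m d"
  then obtain a b where ab: "\<forall>x. f x = (if x \<in> cube m then (\<Prod>j<d. b j + (\<Sum>i<m. a j i * x i)) else 0)"
    unfolding Tgen_def by blast
  have "f = cutf m (\<lambda>x. \<Prod>j<d. b j + (\<Sum>i<m. a j i * x i))"
    using ab unfolding cutf_def by auto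
  moreover have "cutf m (\<lambda>x. \<Prod>j<d. b j + (\<Sum>i<m. a j i * x i)) \<in> RM m d"
    by (rule RM_prodk) (rule RM_affine)
  ultimately show "f \<in> RM m d" by simp
qed

lemma finite_RM: "finite (RM m d)"
proof -
  have "RM m d \<subseteq> (\<lambda>g x. if x \<in> cube m then g x else 0) ` (cube m \<rightarrow>\<^sub>E (UNIV::bit set))"
  proof
    fix f assume f: "f \<in> RM m d"
    show "f \<in> (\<lambda>g x. if x \<in> cube m then g x else 0) ` (cube m \<rightarrow>\<^sub>E (UNIV::bit set))"
    proof (rule image_eqI[where x="restrict f (cube m)"])
      show "f = (\<lambda>x. if x \<in> cube m then restrict f (cube m) x else 0)"
        using RM_zero[OF f] by auto
    qed simp
  qed
  then show ?thesis by (rule finite_subset) (intro finite_imageI finite_PiE finite_cube; simp)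
qed

lemma RM_zero_fun: "(\<lambda>x. 0) \<in> RM m d"
proof -
  have "cutf m (\<lambda>x. 0) \<in> RM m d" using RM_mono[OF RM_const[of m 0]] by simp
  moreover have "cutf m (\<lambda>x. 0) = (\<lambda>x. 0)" by (auto simp: cutf_def)
  ultimately show ?thesis by simp
qed



lemma prod_of_bool: "finite A \<Longrightarrow> (\<Prod>j\<in>A. of_bool (P j) :: real) = of_bool (\<forall>j\<in>A. P j)"
  by (induction A rule: finite_induct) auto

lemma chi_alt: "chi b = 1 - 2 * of_bool (b = 1)" by (cases b) (auto simp: chi_def)

lemma card_of_bool:
  assumes f: "finite A"
  shows "real (card {y\<in>A. Q y}) = (\<Sum>y\<in>A. of_bool (Q y))"
proof -
  have e: "{y\<in>A. Q y} = A \<inter> {y. Q y}" by blast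
  have "(\<Sum>y\<in>A. of_bool (Q y)) = (of_nat (card (A \<inter> {y. Q y})) :: real)"
    by (rule sum_of_bool_eq[OF f f])
  then show ?thesis unfolding e by simp
qed

lemma lin_sum_swap:
  "(\<Sum>j\<in>J. b j + (\<Sum>i<m. a j i * y i)) = (\<Sum>j\<in>J. b j) + (\<Sum>i<m. (\<Sum>j\<in>J. a j i) * (y i :: bit))"
proof -
  have "(\<Sum>j\<in>J. b j + (\<Sum>i<m. a j i * y i)) = (\<Sum>j\<in>J. b j) + (\<Sum>j\<in>J. \<Sum>i<m. a j i * y i)"
    by (rule sum.distrib)
  also have "(\<Sum>j\<in>J. \<Sum>i<m. a j i * y i) = (\<Sum>i<m. \<Sum>j\<in>J. a j i * y i)" by (rule sum.swap)
  also have "\<dots> = (\<Sum>i<m. (\<Sum>j\<in>J. a j i) * y i)" by (simp only: sum_distrib_right)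
  finally show ?thesis .
qed

lemma supp_count:
  assumes indep: "\<forall>J\<subseteq>{..<d}. J \<noteq> {} \<longrightarrow> (\<exists>i<m. (\<Sum>j\<in>J. a j i) \<noteq> 0)"
  shows "real (card {y\<in>cube m. (\<Prod>j<d. b j + (\<Sum>i<m. a j i * y i)) = 1}) = 2 ^ m / 2 ^ d"
proof -
  define l where "l j y = b j + (\<Sum>i<m. a j i * y i)" for j y
  have step1: "of_bool ((\<Prod>j<d. l j y) = 1) = (1/2) ^ d * (\<Sum>J\<in>Pow {..<d}. (-1) ^ card J *
      chi (\<Sum>j\<in>J. b j) * chi (\<Sum>i<m. (\<Sum>j\<in>J. a j i) * y i))" for y
  proof -
    have "of_bool ((\<Prod>j<d. l j y) = 1) = (of_bool (\<forall>j\<in>{..<d}. l j y = 1) :: real)"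
      by (simp only: prod_bit[OF finite_lessThan]) simp
    also have "\<dots> = (\<Prod>j<d. of_bool (l j y = 1))" by (rule prod_of_bool[symmetric]) simp
    also have "\<dots> = (\<Prod>j<d. (1/2) * (- chi (l j y) + 1))"
      by (rule prod.cong[OF refl]) (simp only: chi_ind[symmetric], simp)
    also have "\<dots> = (1/2) ^ d * (\<Prod>j<d. - chi (l j y) + 1)" by (simp only: prod.distrib prod_constant card_lessThan)
    also have "(\<Prod>j<d. - chi (l j y) + 1) = (\<Sum>J\<in>Pow {..<d}. (\<Prod>j\<in>J. - chi (l j y)) * (\<Prod>j\<in>{..<d} - J. 1))"
      by (rule prod_add) simp
    also have "\<dots> = (\<Sum>J\<in>Pow {..<d}. (-1) ^ card J *
      chi (\<Sum>j\<in>J. b j) * chi (\<Sum>i<m. (\<Sum>j\<in>J. a j i) * y i))"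
    proof (rule sum.cong[OF refl])
      fix J assume "J \<in> Pow {..<d}"
      then have fJ: "finite J" by (auto intro: finite_subset)
      have "(\<Prod>j\<in>J. - chi (l j y)) = (-1) ^ card J * (\<Prod>j\<in>J. chi (l j y))" by (rule prod_uminus)
      also have "(\<Prod>j\<in>J. chi (l j y)) = chi (\<Sum>j\<in>J. l j y)" by (rule chi_sum[OF fJ, symmetric])
      also have "(\<Sum>j\<in>J. l j y) = (\<Sum>j\<in>J. b j) + (\<Sum>i<m. (\<Sum>j\<in>J. a j i) * y i)"
        unfolding l_def by (rule lin_sum_swap)
      finally show "(\<Prod>j\<in>J. - chi (l j y)) * (\<Prod>j\<in>{..<d} - J. 1) = (-1) ^ card J *
        chi (\<Sum>j\<in>J. b j) * chi (\<Sum>i<m. (\<Sum>j\<in>J. a j i) * y i)"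
        by (simp only: chi_add prod.neutral_const mult_1_right mult.assoc)
    qed
    finally show ?thesis .
  qed
  have "real (card {y\<in>cube m. (\<Prod>j<d. l j y) = 1}) = (\<Sum>y\<in>cube m. of_bool ((\<Prod>j<d. l j y) = 1))"
    by (rule card_of_bool[OF finite_cube])
  also have "\<dots> = (1/2) ^ d * (\<Sum>J\<in>Pow {..<d}. (-1) ^ card J * chi (\<Sum>j\<in>J. b j) *
      (\<Sum>y\<in>cube m. chi (\<Sum>i<m. (\<Sum>j\<in>J. a j i) * y i)))"
  proof -
    have "(\<Sum>y\<in>cube m. of_bool ((\<Prod>j<d. l j y) = 1)) = (\<Sum>y\<in>cube m. (1/2) ^ d * (\<Sum>J\<in>Pow {..<d}. (-1) ^ card J *
      chi (\<Sum>j\<in>J. b j) * chi (\<Sum>i<m. (\<Sum>j\<in>J. a j i) * y i)))"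
      by (rule sum.cong[OF refl]) (rule step1)
    also have "\<dots> = (1/2) ^ d * (\<Sum>y\<in>cube m. \<Sum>J\<in>Pow {..<d}. (-1) ^ card J *
      chi (\<Sum>j\<in>J. b j) * chi (\<Sum>i<m. (\<Sum>j\<in>J. a j i) * y i))"
      by (rule sum_distrib_left[symmetric])
    also have "(\<Sum>y\<in>cube m. \<Sum>J\<in>Pow {..<d}. (-1) ^ card J *
      chi (\<Sum>j\<in>J. b j) * chi (\<Sum>i<m. (\<Sum>j\<in>J. a j i) * y i)) =
      (\<Sum>J\<in>Pow {..<d}. \<Sum>y\<in>cube m. (-1) ^ card J *
      chi (\<Sum>j\<in>J. b j) * chi (\<Sum>i<m. (\<Sum>j\<in>J. a j i) * y i))"
      by (rule sum.swap)
    also have "\<dots> = (\<Sum>J\<in>Pow {..<d}. (-1) ^ card J * chi (\<Sum>j\<in>J. b j) *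
      (\<Sum>y\<in>cube m. chi (\<Sum>i<m. (\<Sum>j\<in>J. a j i) * y i)))"
      by (rule sum.cong[OF refl]) (rule sum_distrib_left[symmetric])
    finally show ?thesis .
  qed
  also have "(\<Sum>J\<in>Pow {..<d}. (-1) ^ card J * chi (\<Sum>j\<in>J. b j) *
      (\<Sum>y\<in>cube m. chi (\<Sum>i<m. (\<Sum>j\<in>J. a j i) * y i))) = (\<Sum>J\<in>Pow {..<d}. if J = {} then 2 ^ m else 0)"
  proof (rule sum.cong[OF refl])
    fix J assume J: "J \<in> Pow {..<d}"
    show "(-1) ^ card J * chi (\<Sum>j\<in>J. b j) *
      (\<Sum>y\<in>cube m. chi (\<Sum>i<m. (\<Sum>j\<in>J. a j i) * y i)) = (if J = {} then 2 ^ m else 0)"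
    proof (cases "J = {}")
      case True
      then show ?thesis using cube_char_sum0[of m "\<lambda>i. 0"] by simp
    next
      case False
      then obtain i where i: "i < m" "(\<Sum>j\<in>J. a j i) = 1" using indep J by auto
      show ?thesis using cube_char_sum[of i m "\<lambda>i. \<Sum>j\<in>J. a j i", OF i] False by simp
    qed
  qed
  also have "\<dots> = 2 ^ m" by (subst sum.delta) auto
  finally show ?thesis unfolding l_def by (simp add: power_divide)
qed



definition sh :: "nat \<Rightarrow> (nat \<Rightarrow> bit) \<Rightarrow> bfun \<Rightarrow> bfun" where
  "sh m v \<tau> = (\<lambda>y. if y \<in> cube m then \<tau> (\<lambda>i. y i + v i) else 0)"

lemma bit_alg1: "(a::bit) - (a + b) = b" by (cases a; cases b) auto
lemma bit_alg2: "(a::bit) + (a - b) = b" by (cases a; cases b) auto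
lemma bit_alg3: "((y::bit) + v) + v = y" by (cases y; cases v) auto
lemma bit_alg4: "(x0::bit) + (x + x0) = x" by (cases x; cases x0) auto

lemma sh_T:
  assumes t: "\<tau> \<in> Tgen m d" and v: "v \<in> cube m"
  shows "sh m v \<tau> \<in> Tgen m d"
proof -
  from t obtain a b where ind: "\<forall>J\<subseteq>{..<d}. J \<noteq> {} \<longrightarrow> (\<exists>i<m. (\<Sum>j\<in>J. a j i) \<noteq> 0)"
    and ab: "\<forall>x. \<tau> x = (if x \<in> cube m then (\<Prod>j<d. b j + (\<Sum>i<m. a j i * x i)) else 0)"
    unfolding Tgen_def by blast
  define b' where "b' j = b j + (\<Sum>i<m. a j i * v i)" for j
  have "\<forall>y. sh m v \<tau> y = (if y \<in> cube m then (\<Prod>j<d. b' j + (\<Sum>i<m. a j i * y i)) else 0)"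
  proof
    fix y show "sh m v \<tau> y = (if y \<in> cube m then (\<Prod>j<d. b' j + (\<Sum>i<m. a j i * y i)) else 0)"
    proof (cases "y \<in> cube m")
      case True
      then have yv: "(\<lambda>i. y i + v i) \<in> cube m" using cube_add v by blast
      have "sh m v \<tau> y = (\<Prod>j<d. b j + (\<Sum>i<m. a j i * (y i + v i)))"
        using True yv ab unfolding sh_def by simp
      also have "\<dots> = (\<Prod>j<d. b' j + (\<Sum>i<m. a j i * y i))"
      proof (rule prod.cong[OF refl])
        fix j
        have "(\<Sum>i<m. a j i * (y i + v i)) = (\<Sum>i<m. a j i * y i) + (\<Sum>i<m. a j i * v i)"
          by (simp only: distrib_left sum.distrib)
        then show "b j + (\<Sum>i<m. a j i * (y i + v i)) = b' j + (\<Sum>i<m. a j i * y i)"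
          unfolding b'_def by (simp only: ac_simps)
      qed
      finally show ?thesis using True by simp
    qed (simp add: sh_def)
  qed
  then show ?thesis using ind unfolding Tgen_def by blast
qed

lemma Tgen_zero: "\<tau> \<in> Tgen m d \<Longrightarrow> y \<notin> cube m \<Longrightarrow> \<tau> y = 0"
  using RM_zero Tgen_RM by blast

lemma sh_sh:
  assumes t: "\<tau> \<in> Tgen m d" and v: "v \<in> cube m"
  shows "sh m v (sh m v \<tau>) = \<tau>"
proof
  fix y show "sh m v (sh m v \<tau>) y = \<tau> y"
  proof (cases "y \<in> cube m")
    case True
    then have yv: "(\<lambda>i. y i + v i) \<in> cube m" using cube_add v by blast
    have e: "(\<lambda>i. y i + v i + v i) = y" by (simp only: bit_alg3)
    show ?thesis unfolding sh_def by (simp only: if_P[OF True] if_P[OF yv] e)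
  qed (simp add: sh_def Tgen_zero[OF t])
qed

lemma N_const:
  assumes x: "x \<in> cube m" and x0: "x0 \<in> cube m"
  shows "(\<Sum>\<tau>\<in>Tgen m d. chi (\<tau> x)) = (\<Sum>\<tau>\<in>Tgen m d. chi (\<tau> x0))"
proof -
  define v where "v = (\<lambda>i. x i + x0 i)"
  have v: "v \<in> cube m" unfolding v_def by (rule cube_add[OF x x0])
  have e: "(\<lambda>i. x0 i + v i) = x" unfolding v_def by (simp only: bit_alg4)
  have "(\<Sum>\<tau>\<in>Tgen m d. chi (sh m v \<tau> x0)) = (\<Sum>\<tau>\<in>Tgen m d. chi (\<tau> x0))"
    by (rule involution_sum_eq[where F="\<lambda>\<tau>. chi (\<tau> x0)"]) (use sh_T sh_sh v in auto)
  moreover have "sh m v \<tau> x0 = \<tau> x" for \<tau> unfolding sh_def using x0 e by simp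
  ultimately show ?thesis by simp
qed

lemma sum_chi_tau:
  assumes t: "\<tau> \<in> Tgen m d"
  shows "(\<Sum>y\<in>cube m. chi (\<tau> y)) = 2 ^ m - 2 * (2 ^ m / 2 ^ d)"
proof -
  from t obtain a b where ind: "\<forall>J\<subseteq>{..<d}. J \<noteq> {} \<longrightarrow> (\<exists>i<m. (\<Sum>j\<in>J. a j i) \<noteq> 0)"
    and ab: "\<forall>x. \<tau> x = (if x \<in> cube m then (\<Prod>j<d. b j + (\<Sum>i<m. a j i * x i)) else 0)"
    unfolding Tgen_def by blast
  have e: "{y\<in>cube m. \<tau> y = 1} = {y\<in>cube m. (\<Prod>j<d. b j + (\<Sum>i<m. a j i * y i)) = 1}"
    using ab by auto
  have "(\<Sum>y\<in>cube m. chi (\<tau> y)) = (\<Sum>y\<in>cube m. 1 - 2 * of_bool (\<tau> y = 1))"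
    by (simp only: chi_alt)
  also have "\<dots> = real (card (cube m)) - 2 * (\<Sum>y\<in>cube m. of_bool (\<tau> y = 1))"
    by (simp add: sum_subtractf sum_distrib_left)
  also have "(\<Sum>y\<in>cube m. of_bool (\<tau> y = 1)) = real (card {y\<in>cube m. \<tau> y = 1})"
    by (rule card_of_bool[OF finite_cube, symmetric])
  also have "\<dots> = 2 ^ m / 2 ^ d" unfolding e by (rule supp_count[OF ind])
  finally show ?thesis by (simp add: card_cube)
qed

lemma N_val:
  assumes x: "x \<in> cube m"
  shows "(\<Sum>\<tau>\<in>Tgen m d. chi (\<tau> x)) = real (card (Tgen m d)) * (1 - 2 / 2 ^ d)"
proof -
  have fT: "finite (Tgen m d)" using finite_subset[OF Tgen_RM finite_RM] .
  have "2 ^ m * (\<Sum>\<tau>\<in>Tgen m d. chi (\<tau> x)) = (\<Sum>y\<in>cube m. \<Sum>\<tau>\<in>Tgen m d. chi (\<tau> y))"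
    using N_const[OF _ x] by (simp add: card_cube)
  also have "\<dots> = (\<Sum>\<tau>\<in>Tgen m d. \<Sum>y\<in>cube m. chi (\<tau> y))" by (rule sum.swap)
  also have "\<dots> = (\<Sum>\<tau>\<in>Tgen m d. 2 ^ m - 2 * (2 ^ m / 2 ^ d))"
    by (rule sum.cong[OF refl]) (rule sum_chi_tau)
  also have "\<dots> = 2 ^ m * (real (card (Tgen m d)) * (1 - 2 / 2 ^ d))"
    by (simp add: algebra_simps)
  finally show ?thesis by simp
qed

lemma G_eig:
  assumes f: "f \<in> RM m d" and x: "x \<in> cube m" and Tne: "Tgen m d \<noteq> {}"
  shows "(\<Sum>g\<in>RM m d. Gmat m d f g * chi (g x)) = (1 - 2 / 2 ^ d) * chi (f x)"
proof -
  let ?T = "Tgen m d" and ?R = "RM m d"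
  define S where "S = {g\<in>?R. (\<lambda>y. f y - g y) \<in> ?T}"
  have fT: "finite ?T" using finite_subset[OF Tgen_RM finite_RM] .
  have "(\<Sum>g\<in>?R. Gmat m d f g * chi (g x)) = (\<Sum>g\<in>?R. if (\<lambda>y. f y - g y) \<in> ?T then chi (g x) / card ?T else 0)"
    unfolding Gmat_def by (rule sum.cong) auto
  also have "\<dots> = (\<Sum>g\<in>S. chi (g x) / card ?T)"
    unfolding S_def by (rule sum.inter_filter[OF finite_RM, symmetric])
  also have "\<dots> = (\<Sum>\<tau>\<in>?T. chi (f x + \<tau> x) / card ?T)"
  proof -
    have b: "bij_betw (\<lambda>\<tau> y. f y + \<tau> y) ?T S"
    proof (rule bij_betwI[where g="\<lambda>g y. f y - g y"])
      show "(\<lambda>\<tau> y. f y + \<tau> y) \<in> ?T \<rightarrow> S"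
      proof
        fix \<tau> assume t: "\<tau> \<in> ?T"
        have "(\<lambda>y. f y + \<tau> y) \<in> ?R" using RM_add[OF f] Tgen_RM t by blast
        moreover have "(\<lambda>y. f y - (f y + \<tau> y)) = \<tau>" by (simp only: bit_alg1)
        ultimately show "(\<lambda>y. f y + \<tau> y) \<in> S" unfolding S_def using t by simp
      qed
      show "(\<lambda>g y. f y - g y) \<in> S \<rightarrow> ?T" unfolding S_def by auto
      show "\<And>\<tau>. \<tau> \<in> ?T \<Longrightarrow> (\<lambda>y. f y - (f y + \<tau> y)) = \<tau>" by (simp only: bit_alg1)
      show "\<And>g. g \<in> S \<Longrightarrow> (\<lambda>y. f y + (f y - g y)) = g" by (simp only: bit_alg2)
    qed
    show ?thesis using sum.reindex_bij_betw[OF b, of "\<lambda>g. chi (g x) / card ?T"] by simp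
  qed
  also have "\<dots> = chi (f x) / card ?T * (\<Sum>\<tau>\<in>?T. chi (\<tau> x))"
    unfolding chi_add sum_distrib_left by (rule sum.cong[OF refl]) simp
  also have "\<dots> = (1 - 2 / 2 ^ d) * chi (f x)"
    unfolding N_val[OF x] using Tne fT by simp
  finally show ?thesis .
qed



lemma G_bounds: "0 \<le> Gmat m d f g" "Gmat m d f g \<le> 1"
  unfolding Gmat_def by (auto simp: divide_le_eq)

lemma mone_bounds: "0 \<le> mone f g" "mone f g \<le> (1::real)"
  unfolding mone_def by auto

lemma X_bound:
  assumes "t \<ge> 0"
  shows "\<bar>- t * (mone f g - Gmat m d f g)\<bar> \<le> t"
proof -
  have "\<bar>mone f g - Gmat m d f g\<bar> \<le> 1" using G_bounds[of m d f g] mone_bounds[of f g] by linarith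
  then show ?thesis using assms by (simp add: abs_mult mult_left_le)
qed

lemma mone_sum: "finite R \<Longrightarrow> f \<in> R \<Longrightarrow> (\<Sum>g\<in>R. mone f g * \<phi> g) = \<phi> f"
proof -
  assume "finite R" "f \<in> R"
  have "(\<Sum>g\<in>R. mone f g * \<phi> g) = (\<Sum>g\<in>R. if f = g then \<phi> g else 0)"
    by (rule sum.cong) (auto simp: mone_def)
  also have "\<dots> = \<phi> f" using \<open>finite R\<close> \<open>f \<in> R\<close> by simp
  finally show ?thesis .
qed

lemma mpow_bound:
  fixes X :: "'a \<Rightarrow> 'a \<Rightarrow> real"
  assumes fin: "finite R" and B: "\<And>f g. \<bar>X f g\<bar> \<le> t"
  shows "\<bar>mpow R X k f g\<bar> \<le> (real (card R) * t) ^ k"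
proof (induction k arbitrary: f g)
  case 0
  then show ?case by (simp add: mone_def)
next
  case (Suc k)
  have "\<bar>mpow R X (Suc k) f g\<bar> = \<bar>\<Sum>h\<in>R. X f h * mpow R X k h g\<bar>" by (simp add: mmult_def)
  also have "\<dots> \<le> (\<Sum>h\<in>R. \<bar>X f h * mpow R X k h g\<bar>)" by (rule sum_abs)
  also have "\<dots> \<le> (\<Sum>h\<in>R. t * (real (card R) * t) ^ k)"
  proof (rule sum_mono)
    fix h
    show "\<bar>X f h * mpow R X k h g\<bar> \<le> t * (real (card R) * t) ^ k"
      unfolding abs_mult by (rule mult_mono[OF B Suc.IH]) (use B[of f h] in auto)
  qed
  also have "\<dots> = (real (card R) * t) ^ Suc k" by simp
  finally show ?case .
qed

lemma mpow_summable:
  fixes X :: "'a \<Rightarrow> 'a \<Rightarrow> real"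
  assumes fin: "finite R" and B: "\<And>f g. \<bar>X f g\<bar> \<le> t"
  shows "summable (\<lambda>k. mpow R X k f g / fact k)"
proof (rule summable_comparison_test'[where N=0])
  show "summable (\<lambda>k. inverse (fact k) * (real (card R) * t) ^ k)" by (rule summable_exp)
  fix k :: nat
  show "norm (mpow R X k f g / fact k) \<le> inverse (fact k) * (real (card R) * t) ^ k"
    using mpow_bound[OF fin B, where k=k and f=f and g=g]
    by (simp add: divide_inverse abs_mult mult.commute mult_left_mono)
qed

lemma mpow_eig:
  fixes X :: "'a \<Rightarrow> 'a \<Rightarrow> real"
  assumes fin: "finite R"
    and eig: "\<And>f. f \<in> R \<Longrightarrow> (\<Sum>g\<in>R. X f g * \<phi> g) = \<mu> * \<phi> f"
  shows "f \<in> R \<Longrightarrow> (\<Sum>g\<in>R. mpow R X k f g * \<phi> g) = \<mu> ^ k * \<phi> f"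
proof (induction k arbitrary: f)
  case 0
  then show ?case using mone_sum[OF fin] by simp
next
  case (Suc k)
  have "(\<Sum>g\<in>R. mpow R X (Suc k) f g * \<phi> g) = (\<Sum>g\<in>R. \<Sum>h\<in>R. X f h * mpow R X k h g * \<phi> g)"
    by (simp add: mmult_def sum_distrib_right)
  also have "\<dots> = (\<Sum>h\<in>R. \<Sum>g\<in>R. X f h * (mpow R X k h g * \<phi> g))"
    by (subst sum.swap) (simp add: mult.assoc)
  also have "\<dots> = (\<Sum>h\<in>R. X f h * (\<mu> ^ k * \<phi> h))"
    by (rule sum.cong[OF refl]) (simp add: sum_distrib_left[symmetric] Suc.IH)
  also have "\<dots> = \<mu> ^ k * (\<Sum>h\<in>R. X f h * \<phi> h)"
    by (simp add: sum_distrib_left mult.left_commute)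
  also have "\<dots> = \<mu> ^ Suc k * \<phi> f" using eig[OF Suc.prems] by simp
  finally show ?case .
qed

lemma exp_m1_sums: "(\<lambda>k. (-1::real) ^ k / fact k) sums exp (-1)"
proof -
  have "(\<lambda>k. (-1::real) ^ k /\<^sub>R fact k) sums exp (-1)" by (rule exp_converges)
  then show ?thesis by (simp add: divide_inverse mult.commute)
qed

lemma exp_m1: "exp (-1::real) = (\<Sum>k. (-1) ^ k / fact k)"
  using exp_m1_sums by (rule sums_unique)

lemma mexp_eig:
  fixes X :: "'a \<Rightarrow> 'a \<Rightarrow> real"
  assumes fin: "finite R" and B: "\<And>f g. \<bar>X f g\<bar> \<le> t"
    and eig: "\<And>f. f \<in> R \<Longrightarrow> (\<Sum>g\<in>R. X f g * \<phi> g) = - \<phi> f"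
    and f: "f \<in> R"
  shows "(\<Sum>g\<in>R. mexp R X f g * \<phi> g) = exp (-1) * \<phi> f"
proof -
  have eig': "\<And>f. f \<in> R \<Longrightarrow> (\<Sum>g\<in>R. X f g * \<phi> g) = (-1) * \<phi> f" using eig by simp
  have "(\<Sum>g\<in>R. mexp R X f g * \<phi> g) = (\<Sum>g\<in>R. \<Sum>k. mpow R X k f g / fact k * \<phi> g)"
    unfolding mexp_def by (rule sum.cong[OF refl]) (rule suminf_mult2[OF mpow_summable[OF fin B]])
  also have "\<dots> = (\<Sum>k. \<Sum>g\<in>R. mpow R X k f g / fact k * \<phi> g)"
    by (rule suminf_sum[symmetric]) (rule summable_mult2[OF mpow_summable[OF fin B]])
  also have "\<dots> = (\<Sum>k. (-1) ^ k / fact k * \<phi> f)"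
  proof (rule arg_cong[where f=suminf], rule ext)
    fix k
    have "(\<Sum>g\<in>R. mpow R X k f g / fact k * \<phi> g) = (\<Sum>g\<in>R. mpow R X k f g * \<phi> g) / fact k"
      by (simp add: sum_divide_distrib)
    also have "\<dots> = (-1) ^ k / fact k * \<phi> f" using mpow_eig[OF fin eig' f, of k] by simp
    finally show "(\<Sum>g\<in>R. mpow R X k f g / fact k * \<phi> g) = (-1) ^ k / fact k * \<phi> f" .
  qed
  also have "\<dots> = exp (-1) * \<phi> f"
    unfolding exp_m1 by (rule suminf_mult2[symmetric]) (rule sums_summable[OF exp_m1_sums])
  finally show ?thesis .
qed



lemma Tne: assumes "d \<le> m" shows "Tgen m d \<noteq> {}"
proof -
  define a :: "nat \<Rightarrow> nat \<Rightarrow> bit" where "a j i = (if i = j then 1 else 0)" for j i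
  have ind: "\<forall>J\<subseteq>{..<d}. J \<noteq> {} \<longrightarrow> (\<exists>i<m. (\<Sum>j\<in>J. a j i) \<noteq> 0)"
  proof (intro allI impI)
    fix J assume J: "J \<subseteq> {..<d}" "J \<noteq> {}"
    then obtain j where j: "j \<in> J" by blast
    have fJ: "finite J" using J finite_subset by blast
    have "(\<Sum>j'\<in>J. a j' j) = (\<Sum>j'\<in>J. if j = j' then 1 else 0)"
      unfolding a_def by (rule sum.cong) auto
    also have "\<dots> = 1" using j fJ by (subst sum.delta') auto
    finally show "\<exists>i<m. (\<Sum>j\<in>J. a j i) \<noteq> 0" using j J assms by (intro exI[of _ j]) auto
  qed
  have "(\<lambda>x. if x \<in> cube m then (\<Prod>j<d. (0::bit) + (\<Sum>i<m. a j i * x i)) else 0) \<in> Tgen m d"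
    unfolding Tgen_def
    by (rule CollectI, rule exI[of _ a], rule exI[of _ "\<lambda>j. 0"], rule conjI[OF ind], rule allI, rule refl)
  then show ?thesis by blast
qed

lemma A_eig:
  assumes d1: "1 \<le> d" and dm: "d \<le> m" and t: "t = 2 ^ (d - 1)"
    and f: "f \<in> RM m d" and x: "x \<in> cube m"
  shows "(\<Sum>g\<in>RM m d. Amat m d t f g * chi (g x)) = exp (-1) * chi (f x)"
proof -
  have t0: "t \<ge> 0" using t by simp
  have td: "t * (2 / 2 ^ d) = 1"
  proof -
    have "(2::real) ^ d = 2 * 2 ^ (d - 1)" using d1 by (metis Suc_diff_le diff_Suc_1 power_Suc)
    then show ?thesis using t by simp
  qed
  show ?thesis unfolding Amat_def
  proof (rule mexp_eig[OF finite_RM X_bound[OF t0] _ f])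
    fix f assume f: "f \<in> RM m d"
    have "(\<Sum>g\<in>RM m d. - t * (mone f g - Gmat m d f g) * chi (g x)) =
      - t * ((\<Sum>g\<in>RM m d. mone f g * chi (g x)) - (\<Sum>g\<in>RM m d. Gmat m d f g * chi (g x)))"
    proof -
      have "(\<Sum>g\<in>RM m d. - t * (mone f g - Gmat m d f g) * chi (g x)) =
        (\<Sum>g\<in>RM m d. - t * (mone f g * chi (g x) - Gmat m d f g * chi (g x)))"
        by (rule sum.cong[OF refl]) (simp add: algebra_simps)
      also have "\<dots> = - t * ((\<Sum>g\<in>RM m d. mone f g * chi (g x)) - (\<Sum>g\<in>RM m d. Gmat m d f g * chi (g x)))"
        by (simp only: sum_distrib_left[symmetric] sum_subtractf)
      finally show ?thesis .
    qed
    also have "\<dots> = - t * (chi (f x) - (1 - 2 / 2 ^ d) * chi (f x))"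
      using mone_sum[OF finite_RM f] G_eig[OF f x Tne[OF dm]] by simp
    also have "\<dots> = - (t * (2 / 2 ^ d)) * chi (f x)" by (simp add: algebra_simps)
    also have "\<dots> = - chi (f x)" by (simp only: td)
    finally show "(\<Sum>g\<in>RM m d. - t * (mone f g - Gmat m d f g) * chi (g x)) = - chi (f x)" .
  qed
qed



definition lin :: "nat \<Rightarrow> (nat \<Rightarrow> bit) \<Rightarrow> bfun" where
  "lin m x = cutf m (\<lambda>y. \<Sum>i<m. x i * y i)"

lemma lin_RM: "1 \<le> d \<Longrightarrow> lin m x \<in> RM m d"
  unfolding lin_def using RM_mono[OF RM_lin[of m m x]] by simp

lemma lin_unit: "(i::nat) < m \<Longrightarrow> lin m x (\<lambda>k. if k = i then 1 else 0) = x i"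
  unfolding lin_def cutf_def using unit_cube[of i m] sum_unit[of i m x] by simp

lemma lin_inj: "inj_on (lin m) (cube m)"
proof (rule inj_onI)
  fix x x' assume x: "x \<in> cube m" and x': "x' \<in> cube m" and e: "lin m x = lin m x'"
  show "x = x'"
  proof
    fix i show "x i = x' i"
    proof (cases "i < m")
      case True
      then show ?thesis using lin_unit[OF True, of x] lin_unit[OF True, of x'] e by simp
    next
      case False
      then show ?thesis using x x' by (auto simp: cube_def)
    qed
  qed
qed

lemma chi_neq: "(a::bit) \<noteq> b \<Longrightarrow> chi a * chi b = -1"
  by (cases a; cases b) auto

lemma orth:
  assumes d1: "1 \<le> d" and x: "x \<in> cube m" and y: "y \<in> cube m"
  shows "(\<Sum>s\<in>RM m d. chi (s x) * chi (s y)) = (if x = y then real (card (RM m d)) else 0)"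
proof (cases "x = y")
  case True
  then show ?thesis by simp
next
  case False
  then obtain i where i: "x i \<noteq> y i" by blast
  have im: "i < m"
  proof (rule ccontr)
    assume "\<not> i < m" then show False using x y i by (auto simp: cube_def)
  qed
  define s0 where "s0 = cutf m (\<lambda>z. z i)"
  have s0R: "s0 \<in> RM m d" unfolding s0_def using RM_mono[OF RM_coord[OF im] d1] .
  have s0x: "s0 x = x i" "s0 y = y i" unfolding s0_def cutf_def using x y by auto
  have "(\<Sum>s\<in>RM m d. chi (s x) * chi (s y)) = 0"
  proof (rule involution_sum_zero[where \<sigma>="\<lambda>s z. s z + s0 z"])
    fix s assume s: "s \<in> RM m d"
    show "(\<lambda>z. s z + s0 z) \<in> RM m d" using RM_add[OF s s0R] .
    show "(\<lambda>z. s z + s0 z + s0 z) = s" by (simp only: bit_alg3)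
    have "chi (s x + s0 x) * chi (s y + s0 y) = (chi (s x) * chi (s y)) * (chi (x i) * chi (y i))"
      unfolding chi_add s0x by (simp only: ac_simps)
    then show "chi (s x + s0 x) * chi (s y + s0 y) = - (chi (s x) * chi (s y))"
      using chi_neq[OF i] by simp
  qed
  then show ?thesis using False by simp
qed

lemma amgm: "(d::real) > 0 \<Longrightarrow> \<bar>a\<bar> \<le> (a ^ 2 / d + d) / 2"
proof -
  assume d: "d > 0"
  have "0 \<le> (\<bar>a\<bar> - d) ^ 2" by simp
  then have "2 * d * \<bar>a\<bar> \<le> a ^ 2 + d ^ 2" by (simp add: power2_eq_square algebra_simps)
  then show ?thesis using d by (simp add: field_simps power2_eq_square)
qed



theorem proposition1:
  fixes m d :: nat and t \<delta> :: real
  assumes "m \<ge> 1" and "1 \<le> d" and "d \<le> m"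
    and "t = 2 ^ (d - 1)"
    and "\<delta> = 2 powr (- real m / 2)"
  shows "\<exists>w :: bfun \<Rightarrow> bfun \<Rightarrow> real.
    (let R = RM m d; n = real (card R); ip = (\<lambda>u v. \<Sum>h\<in>R. u h * v h) in
      (\<Sum>f\<in>R. ip (w f) (w f)) / n = 1 \<and>
      (\<Sum>f\<in>R. \<Sum>g\<in>R. \<bar>ip (w f) (w g)\<bar>) / n ^ 2 \<le> \<delta> \<and>
      (\<Sum>f\<in>R. ip (w f) (\<lambda>h. \<Sum>g\<in>R. Amat m d t f g * w g h)) / n = exp (- 1))"
proof -
  note d1 = assms(2) and dm = assms(3) and tdef = assms(4) and ddef = assms(5)
  define R where "R = RM m d"
  define n where "n = real (card R)"
  define C where "C = cube m"
  define L where "L = lin m ` C"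
  define s :: real where "s = sqrt (2 ^ m)"
  define w where "w f h = (if h \<in> L then chi (f (inv_into C (lin m) h)) / s else 0)" for f h
  have fR: "finite R" unfolding R_def by (rule finite_RM)
  have fC: "finite C" unfolding C_def by (rule finite_cube)
  have cC: "real (card C) = 2 ^ m" unfolding C_def by (simp add: card_cube)
  have n0: "n > 0" unfolding n_def R_def using RM_zero_fun[of m d] finite_RM[of m d]
    by (simp add: card_gt_0_iff) blast
  have s2: "s * s = 2 ^ m" unfolding s_def by simp
  have s0: "s > 0" unfolding s_def by simp
  have LR: "L \<subseteq> R" unfolding L_def R_def C_def using lin_RM[OF d1] by blast
  have inj: "inj_on (lin m) C" unfolding C_def by (rule lin_inj)
  have wl: "w f (lin m x) = chi (f x) / s" if "x \<in> C" for f x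
    unfolding w_def L_def using that inv_into_f_f[OF inj that] by simp
  have ipw: "(\<Sum>h\<in>R. w f h * w g h) = (\<Sum>x\<in>C. chi (f x) * chi (g x)) / 2 ^ m" for f g
  proof -
    have "(\<Sum>h\<in>R. w f h * w g h) = (\<Sum>h\<in>L. w f h * w g h)"
      by (rule sum.mono_neutral_right[OF fR LR]) (auto simp: w_def)
    also have "\<dots> = (\<Sum>x\<in>C. w f (lin m x) * w g (lin m x))"
      unfolding L_def by (simp add: sum.reindex[OF inj])
    also have "\<dots> = (\<Sum>x\<in>C. chi (f x) * chi (g x) / 2 ^ m)"
      by (rule sum.cong[OF refl]) (simp add: wl s2[symmetric])
    finally show ?thesis by (simp add: sum_divide_distrib)
  qed
  have wself: "(\<Sum>h\<in>R. w f h * w f h) = 1" for f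
    unfolding ipw using cC by simp
  have Aw: "(\<Sum>g\<in>R. Amat m d t f g * w g h) = exp (-1) * w f h" if f: "f \<in> R" for f h
  proof (cases "h \<in> L")
    case True
    then obtain x where x: "x \<in> C" and h: "h = lin m x" unfolding L_def by blast
    have "(\<Sum>g\<in>R. Amat m d t f g * w g h) = (\<Sum>g\<in>R. Amat m d t f g * chi (g x)) / s"
      unfolding h by (simp add: wl[OF x] sum_divide_distrib)
    also have "\<dots> = exp (-1) * chi (f x) / s"
      using A_eig[OF d1 dm tdef f[unfolded R_def] x[unfolded C_def]] unfolding R_def by simp
    finally show ?thesis unfolding h using wl[OF x] by simp
  next
    case False
    then show ?thesis by (simp add: w_def)
  qed
  define k where "k u = (\<Sum>x\<in>C. chi (u x)) / 2 ^ m" for u :: bfun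
  have ipk: "(\<Sum>h\<in>R. w f h * w g h) = k (\<lambda>y. f y + g y)" for f g
    unfolding ipw k_def chi_add by (rule refl)
  have shift: "(\<Sum>g\<in>R. \<bar>k (\<lambda>y. f y + g y)\<bar>) = (\<Sum>u\<in>R. \<bar>k u\<bar>)" if f: "f \<in> R" for f
  proof (rule involution_sum_eq[where F="\<lambda>u. \<bar>k u\<bar>" and \<sigma>="\<lambda>g y. f y + g y"])
    fix g assume g: "g \<in> R"
    show "(\<lambda>y. f y + g y) \<in> R" using RM_add f g unfolding R_def by blast
    show "(\<lambda>y. f y + (f y + g y)) = g" by (simp only: add.assoc[symmetric] bit_add_self add_0)
  qed
  define K1 where "K1 = (\<Sum>u\<in>R. \<bar>k u\<bar>)"
  have K2: "(\<Sum>u\<in>R. (k u) ^ 2) = n / 2 ^ m"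
  proof -
    have "(\<Sum>u\<in>R. (k u) ^ 2) = (\<Sum>u\<in>R. \<Sum>x\<in>C. \<Sum>y\<in>C. chi (u x) * chi (u y)) / (2 ^ m * 2 ^ m)"
    proof -
      have "(\<Sum>u\<in>R. (k u) ^ 2) = (\<Sum>u\<in>R. (\<Sum>x\<in>C. \<Sum>y\<in>C. chi (u x) * chi (u y)) / (2 ^ m * 2 ^ m))"
        by (rule sum.cong[OF refl]) (simp only: k_def power2_eq_square sum_product times_divide_times_eq)
      then show ?thesis by (simp only: sum_divide_distrib)
    qed
    also have "(\<Sum>u\<in>R. \<Sum>x\<in>C. \<Sum>y\<in>C. chi (u x) * chi (u y)) = (\<Sum>x\<in>C. \<Sum>y\<in>C. \<Sum>u\<in>R. chi (u x) * chi (u y))"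
    proof -
      have "(\<Sum>u\<in>R. \<Sum>x\<in>C. \<Sum>y\<in>C. chi (u x) * chi (u y)) = (\<Sum>x\<in>C. \<Sum>u\<in>R. \<Sum>y\<in>C. chi (u x) * chi (u y))"
        by (rule sum.swap)
      also have "\<dots> = (\<Sum>x\<in>C. \<Sum>y\<in>C. \<Sum>u\<in>R. chi (u x) * chi (u y))"
        by (rule sum.cong[OF refl], rule sum.swap)
      finally show ?thesis .
    qed
    also have "\<dots> = (\<Sum>x\<in>C. \<Sum>y\<in>C. if x = y then n else 0)"
      unfolding n_def R_def C_def by (intro sum.cong refl orth[OF d1])
    also have "\<dots> = (\<Sum>x\<in>C. n)" using fC by (intro sum.cong refl) simp
    also have "\<dots> = 2 ^ m * n" using cC by simp
    finally show ?thesis by simp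
  qed
  have dpos: "\<delta> > 0" unfolding ddef by simp
  have dsq: "\<delta> * \<delta> = 1 / 2 ^ m"
  proof -
    have "\<delta> * \<delta> = 2 powr (- real m / 2 + - real m / 2)" unfolding ddef by (rule powr_add[symmetric])
    also have "\<dots> = 2 powr (- real m)" by simp
    also have "\<dots> = 1 / 2 ^ m" by (simp add: powr_minus powr_realpow divide_inverse)
    finally show ?thesis .
  qed
  have K1b: "K1 \<le> n * \<delta>"
  proof -
    have "K1 \<le> (\<Sum>u\<in>R. ((k u) ^ 2 / \<delta> + \<delta>) / 2)" unfolding K1_def
      by (rule sum_mono) (rule amgm[OF dpos])
    also have "\<dots> = ((\<Sum>u\<in>R. (k u) ^ 2) / \<delta> + n * \<delta>) / 2"
      unfolding n_def by (simp add: sum_divide_distrib[symmetric] sum.distrib)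
    also have "\<dots> = (n / 2 ^ m / \<delta> + n * \<delta>) / 2" unfolding K2 ..
    also have "n / 2 ^ m / \<delta> = n * \<delta>"
    proof -
      have "n / 2 ^ m = n * (\<delta> * \<delta>)" using dsq by simp
      then show ?thesis using dpos by simp
    qed
    finally show ?thesis by (simp add: mult.commute)
  qed
  have c1: "(\<Sum>f\<in>R. \<Sum>h\<in>R. w f h * w f h) / n = 1"
    using n0 unfolding wself n_def by simp
  have c2: "(\<Sum>f\<in>R. \<Sum>g\<in>R. \<bar>\<Sum>h\<in>R. w f h * w g h\<bar>) / n ^ 2 \<le> \<delta>"
  proof -
    have "(\<Sum>f\<in>R. \<Sum>g\<in>R. \<bar>\<Sum>h\<in>R. w f h * w g h\<bar>) = (\<Sum>f\<in>R. K1)"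
      unfolding ipk K1_def by (rule sum.cong[OF refl]) (rule shift)
    also have "\<dots> = n * K1" unfolding n_def by simp
    finally have e: "(\<Sum>f\<in>R. \<Sum>g\<in>R. \<bar>\<Sum>h\<in>R. w f h * w g h\<bar>) = n * K1" .
    have "n * K1 / n ^ 2 = K1 / n" using n0 by (simp add: power2_eq_square)
    also have "\<dots> \<le> \<delta>" using K1b n0 by (simp add: divide_le_eq mult.commute)
    finally show ?thesis unfolding e .
  qed
  have c3: "(\<Sum>f\<in>R. \<Sum>h\<in>R. w f h * (\<Sum>g\<in>R. Amat m d t f g * w g h)) / n = exp (-1)"
  proof -
    have "(\<Sum>f\<in>R. \<Sum>h\<in>R. w f h * (\<Sum>g\<in>R. Amat m d t f g * w g h)) = (\<Sum>f\<in>R. exp (-1))"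
    proof (rule sum.cong[OF refl])
      fix f assume f: "f \<in> R"
      have "(\<Sum>h\<in>R. w f h * (\<Sum>g\<in>R. Amat m d t f g * w g h)) = (\<Sum>h\<in>R. exp (-1) * (w f h * w f h))"
        by (rule sum.cong[OF refl]) (simp add: Aw[OF f])
      also have "\<dots> = exp (-1)" by (simp add: sum_distrib_left[symmetric] wself)
      finally show "(\<Sum>h\<in>R. w f h * (\<Sum>g\<in>R. Amat m d t f g * w g h)) = exp (-1)" .
    qed
    then show ?thesis using n0 unfolding n_def by simp
  qed
  show ?thesis
    by (rule exI[of _ w]) (use c1 c2 c3 in \<open>simp add: Let_def R_def n_def\<close>)
qed

end
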